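(* Suppose that Assumptions (A1)–(A5) hold. If $(u,m)$ solves Problem 1, then $u,m\in C^{2,\frac12}(\mathbb{T})$.
   Context: Let $\mathbb{T}=\mathbb{R}/\mathbb{Z}$ be the one-dimensional torus; functions on $\mathbb{T}$ are identified with $1$-periodic functions on $\mathbb{R}$. $C^{2,\frac12}(\mathbb{T})$ denotes the functions of class $C^2$ on $\mathbb{T}$ whose second derivative is $\frac12$-Hölder continuous. Let $H:\mathbb{R}\to\mathbb{R}$ be of class $C^2$, $V:\mathbb{T}\to\mathbb{R}$ continuous, $\alpha>0$, and $0<\epsilon\le 1$. We say $(u,m)$ solves Problem 1 if $u,m\in C^2(\mathbb{T})$, $m>0$ on $\mathbb{T}$, and on $\mathbb{T}$: $$u-u_{xx}+H(u_x)+V(x)=m^\alpha+\epsilon(m-m_{xx}),\qquad m-m_{xx}-(H'(u_x)m)_x=1-\epsilon(u-u_{xx}).$$ Assumptions: (A1) there exist constants $C_1,C_2,C_3>0$ and $\gamma>1$ such that $-C_1+C_2|p|^\gamma\le H(p)\le C_1+C_3|p|^\gamma$ for all $p\in\mathbb{R}$. (A2) There exist constants $\tilde C_1,\tilde C_2,\tilde C_3>0$ such that $-\tilde C_1+\tilde C_2|p|^\gamma\le pH'(p)-H(p)\le \tilde C_1+\tilde C_3|p|^\gamma$ for all $p$ (same $\gamma$ as in (A1)). (A3) $V$ is of class $C^2$. (A4) $H$ is convex. (A5) $H$ is of class $C^4$. *)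

theory Defs
  imports "HOL-Analysis.Analysis"
begin

text \<open>Functions on the torus R/Z are identified with 1-periodic functions on R.\<close>

definition periodic1 :: "(real \<Rightarrow> real) \<Rightarrow> bool" where
  "periodic1 f \<longleftrightarrow> (\<forall>x. f (x + 1) = f x)"

definition C_k :: "nat \<Rightarrow> (real \<Rightarrow> real) \<Rightarrow> bool" where
  "C_k k f \<longleftrightarrow> (\<forall>j<k. \<forall>x. ((deriv ^^ j) f) differentiable (at x))
                 \<and> continuous_on UNIV ((deriv ^^ k) f)"

definition C2_torus :: "(real \<Rightarrow> real) \<Rightarrow> bool" where
  "C2_torus f \<longleftrightarrow> periodic1 f \<and> C_k 2 f"

definition holder_half :: "(real \<Rightarrow> real) \<Rightarrow> bool" where
  "holder_half g \<longleftrightarrow> (\<exists>C. \<forall>x y. \<bar>g x - g y\<bar> \<le> C * \<bar>x - y\<bar> powr (1/2))"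

definition C2_half_torus :: "(real \<Rightarrow> real) \<Rightarrow> bool" where
  "C2_half_torus f \<longleftrightarrow> C2_torus f \<and> holder_half (deriv (deriv f))"

definition solves_problem1 ::
  "(real \<Rightarrow> real) \<Rightarrow> (real \<Rightarrow> real) \<Rightarrow> real \<Rightarrow> real \<Rightarrow>
   (real \<Rightarrow> real) \<Rightarrow> (real \<Rightarrow> real) \<Rightarrow> bool" where
  "solves_problem1 H V \<alpha> \<epsilon> u m \<longleftrightarrow>
     C2_torus u \<and> C2_torus m \<and> (\<forall>x. m x > 0) \<and>
     (\<forall>x. u x - deriv (deriv u) x + H (deriv u x) + V x
            = m x powr \<alpha> + \<epsilon> * (m x - deriv (deriv m) x)) \<and>
     (\<forall>x. m x - deriv (deriv m) x - deriv (\<lambda>y. deriv H (deriv u y) * m y) x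
            = 1 - \<epsilon> * (u x - deriv (deriv u) x))"

end

theory Submission imports Defs begin

definition good :: "(real \<Rightarrow> real) \<Rightarrow> bool" where
  "good f \<longleftrightarrow> periodic1 f \<and> (\<exists>f'. continuous_on UNIV f' \<and> (\<forall>x. (f has_real_derivative f' x) (at x)))"

lemma periodic_nat: "periodic1 g \<Longrightarrow> g (y + real n) = g y"
proof (induction n)
  case (Suc n)
  then show ?case by (simp add: periodic1_def add.assoc[symmetric]) (metis add.assoc add.commute)
qed simp

lemma periodic_int: assumes "periodic1 g" shows "g (y + real_of_int k) = g y"
proof (cases "k \<ge> 0")
  case True then show ?thesis using periodic_nat[OF assms, of y "nat k"] by simp
next
  case False
  then show ?thesis using periodic_nat[OF assms, of "y + real_of_int k" "nat (-k)"] by simp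
qed

lemma periodic_frac: "periodic1 g \<Longrightarrow> g x = g (frac x)"
  using periodic_int[of g "frac x" "\<lfloor>x\<rfloor>"] by (simp add: frac_def)

lemma periodic_bounded:
  assumes "periodic1 g" "continuous_on UNIV g"
  shows "\<exists>M\<ge>0. \<forall>x. \<bar>g x\<bar> \<le> M"
proof -
  have "compact (g ` {0..1})"
    by (rule compact_continuous_image) (auto intro: continuous_on_subset[OF assms(2)])
  then obtain M where M: "\<forall>y\<in>g ` {0..1}. norm y \<le> M"
    using compact_imp_bounded bounded_iff by metis
  have "\<bar>g x\<bar> \<le> M" for x
  proof -
    have "frac x \<in> {0..1}" using frac_lt_1[of x] frac_ge_0[of x] by auto
    then show ?thesis using M periodic_frac[OF assms(1), of x] by fastforce
  qed
  moreover have "M \<ge> 0" using M[rule_format, of "g 0"] by auto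
  ultimately show ?thesis by blast
qed

lemma periodic_deriv:
  assumes "periodic1 f" "\<And>x. (f has_real_derivative f' x) (at x)"
  shows "periodic1 f'"
  unfolding periodic1_def
proof
  fix x
  have "((\<lambda>t. f (t + 1)) has_real_derivative f' (x+1)) (at x)"
  proof -
    have "((\<lambda>t. t + 1) has_real_derivative 1) (at x)" by (auto intro!: derivative_eq_intros)
    from DERIV_chain2[OF assms(2)[of "x+1"] this] show ?thesis by simp
  qed
  moreover have "(\<lambda>t. f (t + 1)) = f" using assms(1) by (auto simp: periodic1_def)
  ultimately show "f' (x+1) = f' x" using DERIV_unique assms(2) by metis
qed

lemma good_lipschitz:
  assumes "good f"
  shows "\<exists>B\<ge>0. \<forall>x y. \<bar>f x - f y\<bar> \<le> B * \<bar>x - y\<bar>"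
proof -
  obtain f' where c: "continuous_on UNIV f'" and d: "\<And>x. (f has_real_derivative f' x) (at x)"
    and p: "periodic1 f" using assms unfolding good_def by blast
  obtain B where B: "B \<ge> 0" "\<And>x. \<bar>f' x\<bar> \<le> B"
    using periodic_bounded[OF periodic_deriv[OF p d] c] by blast
  have *: "\<bar>f x - f y\<bar> \<le> B * \<bar>x - y\<bar>" if yx: "y < x" for x y
  proof -
    obtain z where "f x - f y = (x - y) * f' z" using MVT2[OF yx, of f f'] d by metis
    then have "\<bar>f x - f y\<bar> = \<bar>x - y\<bar> * \<bar>f' z\<bar>" by (simp add: abs_mult)
    also have "\<dots> \<le> \<bar>x - y\<bar> * B" by (rule mult_left_mono) (use B in auto)
    finally show ?thesis by (simp add: mult.commute)
  qed
  have "\<bar>f x - f y\<bar> \<le> B * \<bar>x - y\<bar>" for x y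
    using *[of x y] *[of y x] by (cases x y rule: linorder_cases) (auto simp: abs_minus_commute)
  then show ?thesis using B by blast
qed

lemma good_holder:
  assumes "good f" shows "holder_half f"
proof -
  obtain B where B: "B \<ge> 0" "\<And>x y. \<bar>f x - f y\<bar> \<le> B * \<bar>x - y\<bar>" using good_lipschitz[OF assms] by blast
  have cont: "continuous_on UNIV f" using assms unfolding good_def
    by (meson DERIV_isCont continuous_at_imp_continuous_on)
  obtain M where M: "M \<ge> 0" "\<And>x. \<bar>f x\<bar> \<le> M"
    using periodic_bounded[OF _ cont] assms unfolding good_def by blast
  have "\<bar>f x - f y\<bar> \<le> (B + 2*M) * \<bar>x - y\<bar> powr (1/2)" for x y
  proof (cases "\<bar>x - y\<bar> \<le> 1")
    case True
    have "\<bar>x - y\<bar> \<le> \<bar>x - y\<bar> powr (1/2)"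
    proof (cases "x = y")
      case False
      then have "\<bar>x - y\<bar> powr 1 \<le> \<bar>x - y\<bar> powr (1/2)"
        using True by (intro powr_mono') auto
      then show ?thesis using False by simp
    qed simp
    then have "B * \<bar>x - y\<bar> \<le> B * \<bar>x - y\<bar> powr (1/2)" using B(1) by (simp add: mult_left_mono)
    moreover have "0 \<le> 2 * M * \<bar>x - y\<bar> powr (1/2)" using M by simp
    ultimately show ?thesis using B(2)[of x y] by (simp add: distrib_right)
  next
    case False
    then have "1 \<le> \<bar>x - y\<bar> powr (1/2)" by (simp add: ge_one_powr_ge_zero)
    then have "2*M \<le> 2*M * \<bar>x - y\<bar> powr (1/2)" using M by (metis mult.right_neutral mult_left_mono mult_nonneg_nonneg zero_le_numeral)
    moreover have "0 \<le> B * \<bar>x - y\<bar> powr (1/2)" using B by simp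
    moreover have "\<bar>f x - f y\<bar> \<le> 2*M" using M(2)[of x] M(2)[of y] by linarith
    ultimately show ?thesis by (simp add: distrib_right)
  qed
  then show ?thesis unfolding holder_half_def by blast
qed

lemma good_cont: "good f \<Longrightarrow> continuous_on UNIV f"
  unfolding good_def by (meson DERIV_isCont continuous_at_imp_continuous_on)

lemma good_const: "good (\<lambda>x. c)"
  unfolding good_def periodic1_def by (auto intro!: exI[of _ "\<lambda>x. 0"])

lemma good_add: "good f \<Longrightarrow> good g \<Longrightarrow> good (\<lambda>x. f x + g x)"
  unfolding good_def periodic1_def
  apply clarify
  subgoal for f' g' by (auto intro!: exI[of _ "\<lambda>x. f' x + g' x"] continuous_intros DERIV_add)
  done

lemma good_diff: "good f \<Longrightarrow> good g \<Longrightarrow> good (\<lambda>x. f x - g x)"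
  unfolding good_def periodic1_def
  apply clarify
  subgoal for f' g' by (auto intro!: exI[of _ "\<lambda>x. f' x - g' x"] continuous_intros DERIV_diff)
  done

lemma good_mult: assumes "good f" "good g" shows "good (\<lambda>x. f x * g x)"
proof -
  have cf: "continuous_on UNIV f" "continuous_on UNIV g" using assms good_cont by auto
  from assms show ?thesis
  unfolding good_def periodic1_def
  apply clarify
  subgoal for f' g' by (auto intro!: exI[of _ "\<lambda>x. f' x * g x + g' x * f x"] continuous_intros DERIV_mult cf)
  done
qed

lemma good_divide: assumes "good f" "good g" "\<And>x. g x \<noteq> 0" shows "good (\<lambda>x. f x / g x)"
proof -
  have cf: "continuous_on UNIV f" "continuous_on UNIV g" using assms good_cont by auto
  from assms show ?thesis
  unfolding good_def periodic1_def
  apply clarify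
  subgoal for f' g' by (auto intro!: exI[of _ "\<lambda>x. (f' x * g x - f x * g' x) / (g x * g x)"] continuous_intros DERIV_divide cf)
  done
qed

lemma good_comp: assumes "good f" "\<And>y. (h has_real_derivative h' y) (at y)" "continuous_on UNIV h'"
  shows "good (\<lambda>x. h (f x))"
proof -
  have cf: "continuous_on UNIV f" using assms good_cont by auto
  have ch: "continuous_on UNIV (\<lambda>x. h' (f x))"
    using continuous_on_compose[OF cf, of h'] assms(3) continuous_on_subset by (auto simp: o_def)
  from assms(1) show ?thesis
  unfolding good_def periodic1_def
  apply clarify
  subgoal for f' by (auto intro!: exI[of _ "\<lambda>x. h' (f x) * f' x"] continuous_intros DERIV_chain2[OF assms(2)] ch)
  done
qed

lemma good_powr: assumes "good f" "\<And>x. f x > 0" shows "good (\<lambda>x. f x powr a)"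
proof -
  have cf: "continuous_on UNIV f" using assms good_cont by auto
  from assms show ?thesis
  unfolding good_def periodic1_def
  apply clarify
  subgoal for f' by (auto intro!: exI[of _ "\<lambda>x. a * f x powr (a - of_nat 1) * f' x"] continuous_intros DERIV_fun_powr cf simp: less_imp_neq[symmetric])
  done
qed

lemma Ck2:
  assumes "C_k 2 f"
  shows "\<And>x. (f has_real_derivative deriv f x) (at x)"
    "\<And>x. (deriv f has_real_derivative deriv (deriv f) x) (at x)"
    "continuous_on UNIV (deriv (deriv f))"
proof -
  have d0: "f differentiable (at x)" and d1: "deriv f differentiable (at x)" for x
    using assms unfolding C_k_def
    by (metis funpow_0 less_2_cases_iff, metis One_nat_def funpow.simps(2) funpow_0 o_apply lessI numeral_2_eq_2)
  show "\<And>x. (f has_real_derivative deriv f x) (at x)"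
    "\<And>x. (deriv f has_real_derivative deriv (deriv f) x) (at x)"
    using d0 d1 DERIV_deriv_iff_real_differentiable by blast+
  show "continuous_on UNIV (deriv (deriv f))"
    using assms unfolding C_k_def by (simp add: numeral_2_eq_2)
qed

lemma Ck4:
  assumes "C_k 4 f"
  shows "\<And>x. (f has_real_derivative deriv f x) (at x)"
    "\<And>x. (deriv f has_real_derivative deriv (deriv f) x) (at x)"
    "\<And>x. (deriv (deriv f) has_real_derivative deriv (deriv (deriv f)) x) (at x)"
    "continuous_on UNIV (deriv f)"
    "continuous_on UNIV (deriv (deriv f))"
    "continuous_on UNIV (deriv (deriv (deriv f)))"
proof -
  have e: "\<And>j x. j < 4 \<Longrightarrow> ((deriv ^^ j) f) differentiable (at x)"
    using assms unfolding C_k_def by blast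
  have d0: "f differentiable (at x)" for x using e[of 0 x] by simp
  have d1: "deriv f differentiable (at x)" for x using e[of 1 x] by simp
  have d2: "deriv (deriv f) differentiable (at x)" for x using e[of 2 x] by (simp add: numeral_2_eq_2)
  have d3: "deriv (deriv (deriv f)) differentiable (at x)" for x using e[of 3 x] by (simp add: numeral_3_eq_3)
  show "\<And>x. (f has_real_derivative deriv f x) (at x)"
    "\<And>x. (deriv f has_real_derivative deriv (deriv f) x) (at x)"
    "\<And>x. (deriv (deriv f) has_real_derivative deriv (deriv (deriv f)) x) (at x)"
    using d0 d1 d2 DERIV_deriv_iff_real_differentiable by blast+
  show "continuous_on UNIV (deriv f)" "continuous_on UNIV (deriv (deriv f))"
    "continuous_on UNIV (deriv (deriv (deriv f)))"
    using d1 d2 d3 by (meson continuous_at_imp_continuous_on differentiable_imp_continuous_within)+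
qed

lemma convex_second_deriv_nonneg:
  fixes H :: "real \<Rightarrow> real"
  assumes cv: "convex_on UNIV H" and d: "\<And>x. (H has_real_derivative H' x) (at x)"
    and d2: "(H' has_real_derivative D) (at x)"
  shows "D \<ge> 0"
proof -
  have tan: "H y - H c \<ge> H' c * (y - c)" for y c
    by (rule convex_on_imp_above_tangent[OF cv]) (use d in auto)
  have "mono_on UNIV H'"
  proof (rule mono_onI)
    fix a b :: real assume "a \<le> b"
    have "(H' b - H' a) * (b - a) \<ge> 0" using tan[of b a] tan[of a b] by (simp add: algebra_simps)
    then show "H' a \<le> H' b" using \<open>a \<le> b\<close>
      by (cases "a = b") (auto simp: zero_le_mult_iff)
  qed
  then show ?thesis using mono_on_imp_deriv_nonneg[OF _ d2] by auto
qed


lemma good_C2: assumes "C_k 2 f" "periodic1 f" shows "good f" "good (deriv f)"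
proof -
  note c = Ck2[OF assms(1)]
  have cd: "continuous_on UNIV (deriv f)"
    by (meson DERIV_isCont c(2) continuous_at_imp_continuous_on)
  show "good f" unfolding good_def using assms(2) c(1) cd by blast
  show "good (deriv f)" unfolding good_def using periodic_deriv[OF assms(2) c(1)] c(2,3) by blast
qed

theorem mainTheorem7:
  fixes H V u m :: "real \<Rightarrow> real" and \<alpha> \<epsilon> :: real
  assumes H_C2: "C_k 2 H"
    and V_cont: "continuous_on UNIV V" and V_per: "periodic1 V"
    and alpha_pos: "\<alpha> > 0" and eps: "0 < \<epsilon>" "\<epsilon> \<le> 1"
    and A1_A2: "\<exists>\<gamma>>1.
        (\<exists>C1 C2 C3. C1 > 0 \<and> C2 > 0 \<and> C3 > 0 \<and>
           (\<forall>p. - C1 + C2 * \<bar>p\<bar> powr \<gamma> \<le> H p \<and> H p \<le> C1 + C3 * \<bar>p\<bar> powr \<gamma>)) \<and>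
        (\<exists>D1 D2 D3. D1 > 0 \<and> D2 > 0 \<and> D3 > 0 \<and>
           (\<forall>p. - D1 + D2 * \<bar>p\<bar> powr \<gamma> \<le> p * deriv H p - H p \<and>
                p * deriv H p - H p \<le> D1 + D3 * \<bar>p\<bar> powr \<gamma>))"
    and A3: "C_k 2 V"
    and A4: "convex_on UNIV H"
    and A5: "C_k 4 H"
    and sol: "solves_problem1 H V \<alpha> \<epsilon> u m"
  shows "C2_half_torus u \<and> C2_half_torus m"
proof -
  have uC: "C2_torus u" and mC: "C2_torus m" and mpos: "\<And>x. m x > 0"
    and eq1: "\<And>x. u x - deriv (deriv u) x + H (deriv u x) + V x
            = m x powr \<alpha> + \<epsilon> * (m x - deriv (deriv m) x)"
    and eq2: "\<And>x. m x - deriv (deriv m) x - deriv (\<lambda>y. deriv H (deriv u y) * m y) x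
            = 1 - \<epsilon> * (u x - deriv (deriv u) x)"
    using sol unfolding solves_problem1_def by auto
  define u1 where "u1 = deriv u"
  define u2 where "u2 = deriv u1"
  define m1 where "m1 = deriv m"
  define m2 where "m2 = deriv m1"
  define H1 where "H1 = deriv H"
  define H2 where "H2 = deriv H1"
  note hC = Ck4[OF A5, folded H1_def, folded H2_def]
  note uD = Ck2[of u, folded u1_def, folded u2_def]
  note mD = Ck2[of m, folded m1_def, folded m2_def]
  have gu: "good u" "good u1" using good_C2[of u] uC unfolding C2_torus_def u1_def by auto
  have gm: "good m" "good m1" using good_C2[of m] mC unfolding C2_torus_def m1_def by auto
  have gV: "good V" using good_C2[of V] A3 V_per by auto
  have uC2: "C_k 2 u" and mC2: "C_k 2 m" using uC mC unfolding C2_torus_def by auto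
  have H2nn: "H2 y \<ge> 0" for y
    using convex_second_deriv_nonneg[OF A4 hC(1) hC(2)] .
  have dprod: "deriv (\<lambda>y. H1 (u1 y) * m y) x = H2 (u1 x) * u2 x * m x + H1 (u1 x) * m1 x" for x
  proof -
    have "((\<lambda>y. H1 (u1 y)) has_real_derivative H2 (u1 x) * u2 x) (at x)"
      using DERIV_chain2[OF hC(2) uD(2)[OF uC2]] .
    from DERIV_mult[OF this mD(1)[OF mC2]]
    show ?thesis by (intro DERIV_imp_deriv) (simp add: algebra_simps)
  qed
  define A where "A = (\<lambda>x. u x + H (u1 x) + V x - m x powr \<alpha> - \<epsilon> * m x)"
  define c where "c = (\<lambda>x. \<epsilon> + H2 (u1 x) * m x)"
  define B where "B = (\<lambda>x. m x - 1 + \<epsilon> * u x - H1 (u1 x) * m1 x)"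
  define D where "D = (\<lambda>x. 1 + \<epsilon> * c x)"
  define G where "G = (\<lambda>x. (B x - c x * A x) / D x)"
  have Dpos: "D x > 0" for x
    using H2nn[of "u1 x"] mpos[of x] eps unfolding D_def c_def by (simp add: add_pos_nonneg)
  have e1: "u2 x - \<epsilon> * m2 x = A x" for x
    using eq1[of x] unfolding A_def u1_def u2_def m1_def m2_def by (simp add: algebra_simps)
  have e2: "m2 x + c x * u2 x = B x" for x
    using eq2[of x] dprod[of x] unfolding B_def c_def u1_def u2_def m1_def m2_def H1_def H2_def
    by (simp add: algebra_simps)
  have m2G: "m2 x = G x" for x
  proof -
    have "m2 x * D x = B x - c x * A x"
      using e1[of x] e2[of x] unfolding D_def by (simp add: algebra_simps)
    then show ?thesis unfolding G_def using Dpos[of x] by (simp add: field_simps)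
  qed
  have u2G: "u2 x = A x + \<epsilon> * G x" for x using e1[of x] m2G[of x] by simp
  have gH: "good (\<lambda>x. H (u1 x))" by (rule good_comp[OF gu(2) hC(1) hC(4)])
  have gH1: "good (\<lambda>x. H1 (u1 x))" by (rule good_comp[OF gu(2) hC(2) hC(5)])
  have gH2: "good (\<lambda>x. H2 (u1 x))" by (rule good_comp[OF gu(2) hC(3) hC(6)])
  have gA: "good A" unfolding A_def
    by (intro good_diff good_add good_mult good_powr gu gH gV gm good_const mpos)
  have gc: "good c" unfolding c_def by (intro good_add good_mult good_const gH2 gm)
  have gB: "good B" unfolding B_def by (intro good_diff good_add good_mult good_const gH1 gm gu)
  have gD: "good D" unfolding D_def by (intro good_add good_mult good_const gc)
  have gG: "good G" unfolding G_def
    by (intro good_divide good_diff good_mult gA gB gc gD) (use Dpos in \<open>simp add: less_imp_neq[symmetric]\<close>)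
  have "deriv (deriv m) = G" using m2G unfolding m2_def m1_def by auto
  then have hm: "holder_half (deriv (deriv m))" using good_holder[OF gG] by simp
  have "deriv (deriv u) = (\<lambda>x. A x + \<epsilon> * G x)" using u2G unfolding u2_def u1_def by auto
  moreover have "good (\<lambda>x. A x + \<epsilon> * G x)" by (intro good_add good_mult gA gG good_const)
  ultimately have hu: "holder_half (deriv (deriv u))" using good_holder by simp
  show ?thesis using hu hm uC mC unfolding C2_half_torus_def by auto
qed

end
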